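(* Let $\breve f\colon\{0,\dots,n\}\to\mathbb{Q}$ and $\breve g\colon\{0,\dots,m\}\to\mathbb{Q}$ be convex and $\breve h$ their min-plus convolution. For every $\delta\ge 0$, the sets $P^-_\delta$ and $P^+_\delta$ are monotone paths.
   Context: Convex means $F(i)-F(i-1)\le F(i+1)-F(i)$ for all interior $i$. $\breve h(k)=\min_{i+j=k}\breve f(i)+\breve g(j)$ for $k\in\{0,\dots,n+m\}$. A point is a pair $(i,j)\in\{0,\dots,n\}\times\{0,\dots,m\}$; it lies on diagonal $i+j$. It is $\delta$-relevant if $\breve f(i)+\breve g(j)\le\breve h(i+j)+\delta$. $P^+_\delta$ is the set of points $(i,k-i)$, $k\in\{0,\dots,n+m\}$, where $i$ is maximal such that $(i,k-i)$ is a $\delta$-relevant point; $P^-_\delta$ is defined likewise with $i$ minimal. A set of points $P$ is a monotone path if for every $k\in\{0,\dots,n+m\}$ it contains exactly one point $(i_k,j_k)$ on diagonal $k$, and $(i_{k+1},j_{k+1})\in\{(i_k+1,j_k),(i_k,j_k+1)\}$ for all $k\in\{0,\dots,n+m-1\}$. *)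

theory Defs
  imports Complex_Main
begin

definition convex_on_range :: "nat \<Rightarrow> (nat \<Rightarrow> rat) \<Rightarrow> bool" where
  "convex_on_range n F \<longleftrightarrow>
     (\<forall>i. 0 < i \<and> i < n \<longrightarrow> F i - F (i - 1) \<le> F (i + 1) - F i)"

definition points :: "nat \<Rightarrow> nat \<Rightarrow> (nat \<times> nat) set" where
  "points n m = {0..n} \<times> {0..m}"

definition minplus_conv :: "nat \<Rightarrow> nat \<Rightarrow> (nat \<Rightarrow> rat) \<Rightarrow> (nat \<Rightarrow> rat) \<Rightarrow> nat \<Rightarrow> rat" where
  "minplus_conv n m f g k = Min {f i + g j | i j. (i, j) \<in> points n m \<and> i + j = k}"

definition relevant :: "nat \<Rightarrow> nat \<Rightarrow> (nat \<Rightarrow> rat) \<Rightarrow> (nat \<Rightarrow> rat) \<Rightarrow> rat \<Rightarrow> nat \<times> nat \<Rightarrow> bool" where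
  "relevant n m f g \<delta> p \<longleftrightarrow>
     p \<in> points n m \<and> f (fst p) + g (snd p) \<le> minplus_conv n m f g (fst p + snd p) + \<delta>"

definition P_plus :: "nat \<Rightarrow> nat \<Rightarrow> (nat \<Rightarrow> rat) \<Rightarrow> (nat \<Rightarrow> rat) \<Rightarrow> rat \<Rightarrow> (nat \<times> nat) set" where
  "P_plus n m f g \<delta> =
     {(i, k - i) | i k. k \<le> n + m \<and> i \<le> k \<and> relevant n m f g \<delta> (i, k - i) \<and>
        (\<forall>i'. i' \<le> k \<and> relevant n m f g \<delta> (i', k - i') \<longrightarrow> i' \<le> i)}"

definition P_minus :: "nat \<Rightarrow> nat \<Rightarrow> (nat \<Rightarrow> rat) \<Rightarrow> (nat \<Rightarrow> rat) \<Rightarrow> rat \<Rightarrow> (nat \<times> nat) set" where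
  "P_minus n m f g \<delta> =
     {(i, k - i) | i k. k \<le> n + m \<and> i \<le> k \<and> relevant n m f g \<delta> (i, k - i) \<and>
        (\<forall>i'. i' \<le> k \<and> relevant n m f g \<delta> (i', k - i') \<longrightarrow> i \<le> i')}"

definition monotone_path :: "nat \<Rightarrow> nat \<Rightarrow> (nat \<times> nat) set \<Rightarrow> bool" where
  "monotone_path n m P \<longleftrightarrow>
     P \<subseteq> points n m \<and>
     (\<forall>k \<le> n + m. \<exists>!p. p \<in> P \<and> fst p + snd p = k) \<and>
     (\<forall>k < n + m. \<forall>p q. p \<in> P \<and> fst p + snd p = k \<and> q \<in> P \<and> fst q + snd q = k + 1 \<longrightarrow>
         q = (fst p + 1, snd p) \<or> q = (fst p, snd p + 1))"

end

theory Submission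
  imports Defs
begin

lemma conv_mono:
  assumes c: "convex_on_range N F" and ab: "a \<le> b" and bN: "b < N"
  shows "F (Suc a) - F a \<le> F (Suc b) - F b"
  using ab bN
proof (induction b rule: dec_induct)
  case base then show ?case by simp
next
  case (step b)
  have "F (Suc b) - F (Suc b - 1) \<le> F (Suc b + 1) - F (Suc b)"
    using c step.prems unfolding convex_on_range_def by auto
  then show ?case using step by simp
qed

lemma fin_conv: "finite {f i + g j | i j. (i, j) \<in> points n m \<and> i + j = k}"
proof -
  have "{f i + g j | i j. (i, j) \<in> points n m \<and> i + j = k}
        \<subseteq> (\<lambda>p. f (fst p) + g (snd p)) ` points n m" by force
  moreover have "finite (points n m)" by (simp add: points_def)
  ultimately show ?thesis by (meson finite_imageI finite_subset)
qed

lemma h_le: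
  assumes "(i, j) \<in> points n m"
  shows "minplus_conv n m f g (i + j) \<le> f i + g j"
  unfolding minplus_conv_def
  by (rule Min_le[OF fin_conv]) (use assms in blast)

lemma h_att:
  assumes "k \<le> n + m"
  shows "\<exists>i j. (i, j) \<in> points n m \<and> i + j = k \<and> f i + g j = minplus_conv n m f g k"
proof -
  let ?A = "{f i + g j | i j. (i, j) \<in> points n m \<and> i + j = k}"
  have "(min k n, k - min k n) \<in> points n m" using assms by (auto simp: points_def)
  then have "?A \<noteq> {}" by force
  then have "Min ?A \<in> ?A" using fin_conv by (rule Min_in[rotated])
  then show ?thesis unfolding minplus_conv_def by force
qed

lemma exch:
  assumes rp: "relevant n m f g \<delta> p"
    and q: "q \<in> points n m" "f (fst q) + g (snd q) = minplus_conv n m f g (fst q + snd q)"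
    and p': "p' \<in> points n m" and q': "q' \<in> points n m"
    and d1: "fst p' + snd p' = fst q + snd q" and d2: "fst q' + snd q' = fst p + snd p"
    and ineq: "f (fst p') + g (snd p') + (f (fst q') + g (snd q')) \<le> f (fst p) + g (snd p) + (f (fst q) + g (snd q))"
  shows "relevant n m f g \<delta> p'"
proof -
  have "minplus_conv n m f g (fst q' + snd q') \<le> f (fst q') + g (snd q')"
    using h_le[of "fst q'" "snd q'"] q' by simp
  then show ?thesis using rp q p' ineq d1 d2 unfolding relevant_def by simp
qed

lemma mpath:
  assumes le: "\<And>k. k \<le> n + m \<Longrightarrow> c k \<le> k \<and> (c k, k - c k) \<in> points n m"
    and st: "\<And>k. k < n + m \<Longrightarrow> c k \<le> c (Suc k) \<and> c (Suc k) \<le> Suc (c k)"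
  shows "monotone_path n m {(c k, k - c k) | k. k \<le> n + m}"
  unfolding monotone_path_def
proof (intro conjI allI impI)
  show "{(c k, k - c k) | k. k \<le> n + m} \<subseteq> points n m" using le by blast
next
  fix k assume k: "k \<le> n + m"
  show "\<exists>!p. p \<in> {(c k, k - c k) | k. k \<le> n + m} \<and> fst p + snd p = k"
  proof (rule ex1I[of _ "(c k, k - c k)"])
    show "(c k, k - c k) \<in> {(c k, k - c k) | k. k \<le> n + m} \<and> fst (c k, k - c k) + snd (c k, k - c k) = k"
      using k le[OF k] by auto
  next
    fix p assume "p \<in> {(c k, k - c k) | k. k \<le> n + m} \<and> fst p + snd p = k"
    then obtain k' where "p = (c k', k' - c k')" "k' \<le> n + m" "fst p + snd p = k" by blast
    then show "p = (c k, k - c k)" using le[of k'] by auto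
  qed
next
  fix k p q assume k: "k < n + m" and
    H: "p \<in> {(c k, k - c k) | k. k \<le> n + m} \<and> fst p + snd p = k \<and>
        q \<in> {(c k, k - c k) | k. k \<le> n + m} \<and> fst q + snd q = k + 1"
  then obtain k1 k2 where p: "p = (c k1, k1 - c k1)" "k1 \<le> n + m"
    and q: "q = (c k2, k2 - c k2)" "k2 \<le> n + m" by blast
  have "k1 = k" using H p le[of k1] by auto
  moreover have "k2 = Suc k" using H q le[of k2] by auto
  ultimately have p2: "p = (c k, k - c k)" and q2: "q = (c (Suc k), Suc k - c (Suc k))"
    using p q by auto
  have ck: "c k \<le> k" using le k by auto
  from st[OF k] have "c (Suc k) = c k \<or> c (Suc k) = Suc (c k)" by auto
  then show "q = (fst p + 1, snd p) \<or> q = (fst p, snd p + 1)"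
  proof
    assume "c (Suc k) = c k" then show ?thesis using p2 q2 ck by auto
  next
    assume "c (Suc k) = Suc (c k)" then show ?thesis using p2 q2 ck by auto
  qed
qed

context
  fixes n m :: nat and f g :: "nat \<Rightarrow> rat" and \<delta> :: rat
  assumes cf: "convex_on_range n f" and cg: "convex_on_range m g" and dpos: "\<delta> \<ge> 0"
begin

definition S :: "nat \<Rightarrow> nat set" where
  "S k = {i. i \<le> k \<and> relevant n m f g \<delta> (i, k - i)}"

lemma S_fin: "finite (S k)"
  by (rule finite_subset[of _ "{..k}"]) (auto simp: S_def)

lemma opt_S:
  assumes "k \<le> n + m"
  obtains i j where "(i, j) \<in> points n m" "i + j = k" "f i + g j = minplus_conv n m f g k"
    "i \<in> S k"
proof -
  obtain i j where h: "(i, j) \<in> points n m" "i + j = k" "f i + g j = minplus_conv n m f g k"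
    using h_att[OF assms] by blast
  have "i \<in> S k" using h dpos unfolding S_def relevant_def by auto
  then show ?thesis using h that by blast
qed

lemma S_ne: "k \<le> n + m \<Longrightarrow> S k \<noteq> {}"
  using opt_S by blast

lemma Smax: "k \<le> n + m \<Longrightarrow> Max (S k) \<in> S k"
  using S_fin S_ne Max_in by blast

lemma Smin: "k \<le> n + m \<Longrightarrow> Min (S k) \<in> S k"
  using S_fin S_ne Min_in by blast

lemma S_pts: "i \<in> S k \<Longrightarrow> i \<le> k \<and> (i, k - i) \<in> points n m"
  unfolding S_def relevant_def by auto

lemma P_plus_eq: "P_plus n m f g \<delta> = {(Max (S k), k - Max (S k)) | k. k \<le> n + m}"
proof (rule set_eqI, rule iffI)
  fix x assume "x \<in> P_plus n m f g \<delta>"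
  then obtain i k where x: "x = (i, k - i)" "k \<le> n + m" "i \<le> k" "relevant n m f g \<delta> (i, k - i)"
    "\<forall>i'. i' \<le> k \<and> relevant n m f g \<delta> (i', k - i') \<longrightarrow> i' \<le> i"
    unfolding P_plus_def by blast
  have "Max (S k) = i"
    by (rule Max_eqI[OF S_fin]) (use x in \<open>auto simp: S_def\<close>)
  then show "x \<in> {(Max (S k), k - Max (S k)) | k. k \<le> n + m}" using x by blast
next
  fix x assume "x \<in> {(Max (S k), k - Max (S k)) | k. k \<le> n + m}"
  then obtain k where x: "x = (Max (S k), k - Max (S k))" "k \<le> n + m" by blast
  have "Max (S k) \<in> S k" using Smax x by blast
  moreover have "\<forall>i'. i' \<le> k \<and> relevant n m f g \<delta> (i', k - i') \<longrightarrow> i' \<le> Max (S k)"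
    using Max_ge[OF S_fin] by (auto simp: S_def)
  ultimately have "Max (S k) \<le> k \<and> relevant n m f g \<delta> (Max (S k), k - Max (S k)) \<and>
     (\<forall>i'. i' \<le> k \<and> relevant n m f g \<delta> (i', k - i') \<longrightarrow> i' \<le> Max (S k))" by (simp add: S_def)
  then show "x \<in> P_plus n m f g \<delta>" unfolding P_plus_def x(1)
    by (intro CollectI exI[of _ "Max (S k)"] exI[of _ k]) (use x(2) in simp)
qed

lemma P_minus_eq: "P_minus n m f g \<delta> = {(Min (S k), k - Min (S k)) | k. k \<le> n + m}"
proof (rule set_eqI, rule iffI)
  fix x assume "x \<in> P_minus n m f g \<delta>"
  then obtain i k where x: "x = (i, k - i)" "k \<le> n + m" "i \<le> k" "relevant n m f g \<delta> (i, k - i)"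
    "\<forall>i'. i' \<le> k \<and> relevant n m f g \<delta> (i', k - i') \<longrightarrow> i \<le> i'"
    unfolding P_minus_def by blast
  have "Min (S k) = i"
    by (rule Min_eqI[OF S_fin]) (use x in \<open>auto simp: S_def\<close>)
  then show "x \<in> {(Min (S k), k - Min (S k)) | k. k \<le> n + m}" using x by blast
next
  fix x assume "x \<in> {(Min (S k), k - Min (S k)) | k. k \<le> n + m}"
  then obtain k where x: "x = (Min (S k), k - Min (S k))" "k \<le> n + m" by blast
  have "Min (S k) \<in> S k" using Smin x by blast
  moreover have "\<forall>i'. i' \<le> k \<and> relevant n m f g \<delta> (i', k - i') \<longrightarrow> Min (S k) \<le> i'"
    using Min_le[OF S_fin] by (auto simp: S_def)
  ultimately have "Min (S k) \<le> k \<and> relevant n m f g \<delta> (Min (S k), k - Min (S k)) \<and>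
     (\<forall>i'. i' \<le> k \<and> relevant n m f g \<delta> (i', k - i') \<longrightarrow> Min (S k) \<le> i')" by (simp add: S_def)
  then show "x \<in> P_minus n m f g \<delta>" unfolding P_minus_def x(1)
    by (intro CollectI exI[of _ "Min (S k)"] exI[of _ k]) (use x(2) in simp)
qed

lemma plus_step1:
  assumes k: "k < n + m"
  shows "Max (S k) \<le> Max (S (Suc k))"
proof -
  let ?i = "Max (S k)"
  have iS: "?i \<in> S k" using Smax k by simp
  then have ik: "?i \<le> k" and rp: "relevant n m f g \<delta> (?i, k - ?i)" by (auto simp: S_def)
  obtain i' j' where o: "(i', j') \<in> points n m" "i' + j' = Suc k"
    "f i' + g j' = minplus_conv n m f g (Suc k)" "i' \<in> S (Suc k)"
    using opt_S[of "Suc k"] k by auto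
  show ?thesis
  proof (cases "i' \<le> ?i")
    case False
    then show ?thesis using Max_ge[OF S_fin o(4)] by simp
  next
    case True
    have pts: "?i \<le> n" "k - ?i \<le> m" using rp by (auto simp: relevant_def points_def)
    have jm: "j' \<le> m" "i' \<le> n" using o(1) by (auto simp: points_def)
    have cv: "g (Suc (k - ?i)) - g (k - ?i) \<le> g (Suc (j' - 1)) - g (j' - 1)"
      by (rule conv_mono[OF cg]) (use True o(2) ik jm in auto)
    have "relevant n m f g \<delta> (?i, Suc (k - ?i))"
    proof (rule exch[OF rp, of "(i', j')" _ "(i', j' - 1)"])
      show "(i', j') \<in> points n m" by fact
      show "f (fst (i', j')) + g (snd (i', j')) = minplus_conv n m f g (fst (i', j') + snd (i', j'))"
        using o by simp
      show "(?i, Suc (k - ?i)) \<in> points n m" using pts True o(2) jm ik by (auto simp: points_def)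
      show "(i', j' - 1) \<in> points n m" using jm by (auto simp: points_def)
      show "fst (?i, Suc (k - ?i)) + snd (?i, Suc (k - ?i)) = fst (i', j') + snd (i', j')"
        using ik o(2) by simp
      show "fst (i', j' - 1) + snd (i', j' - 1) = fst (?i, k - ?i) + snd (?i, k - ?i)"
        using ik o(2) True by simp
      have "Suc (j' - 1) = j'" using True o(2) ik by simp
      then show "f (fst (?i, Suc (k - ?i))) + g (snd (?i, Suc (k - ?i))) + (f (fst (i', j' - 1)) + g (snd (i', j' - 1)))
          \<le> f (fst (?i, k - ?i)) + g (snd (?i, k - ?i)) + (f (fst (i', j')) + g (snd (i', j')))"
        using cv by simp
    qed
    then have "?i \<in> S (Suc k)" using ik by (simp add: S_def Suc_diff_le)
    then show ?thesis using Max_ge[OF S_fin] by simp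
  qed
qed

lemma plus_step2:
  assumes k: "k < n + m"
  shows "Max (S (Suc k)) \<le> Suc (Max (S k))"
proof -
  let ?i = "Max (S (Suc k))"
  have iS: "?i \<in> S (Suc k)" using Smax k by simp
  then have ik: "?i \<le> Suc k" and rp: "relevant n m f g \<delta> (?i, Suc k - ?i)" by (auto simp: S_def)
  obtain i' j' where o: "(i', j') \<in> points n m" "i' + j' = k"
    "f i' + g j' = minplus_conv n m f g k" "i' \<in> S k"
    using opt_S[of k] k by auto
  show ?thesis
  proof (cases "?i \<le> Suc i'")
    case True
    then show ?thesis using Max_ge[OF S_fin o(4)] by simp
  next
    case False
    have pts: "?i \<le> n" "Suc k - ?i \<le> m" using rp by (auto simp: relevant_def points_def)
    have jm: "j' \<le> m" "i' \<le> n" using o(1) by (auto simp: points_def)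
    have cv: "f (Suc i') - f i' \<le> f (Suc (?i - 1)) - f (?i - 1)"
      by (rule conv_mono[OF cf]) (use False pts in auto)
    have "relevant n m f g \<delta> (?i - 1, Suc k - ?i)"
    proof (rule exch[OF rp, of "(i', j')" _ "(Suc i', j')"])
      show "(i', j') \<in> points n m" by fact
      show "f (fst (i', j')) + g (snd (i', j')) = minplus_conv n m f g (fst (i', j') + snd (i', j'))"
        using o by simp
      show "(?i - 1, Suc k - ?i) \<in> points n m" using pts by (auto simp: points_def)
      show "(Suc i', j') \<in> points n m" using jm False pts by (auto simp: points_def)
      show "fst (?i - 1, Suc k - ?i) + snd (?i - 1, Suc k - ?i) = fst (i', j') + snd (i', j')"
        using ik o(2) False by simp
      show "fst (Suc i', j') + snd (Suc i', j') = fst (?i, Suc k - ?i) + snd (?i, Suc k - ?i)"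
        using ik o(2) by simp
      have "Suc (?i - 1) = ?i" using False by simp
      then show "f (fst (?i - 1, Suc k - ?i)) + g (snd (?i - 1, Suc k - ?i)) + (f (fst (Suc i', j')) + g (snd (Suc i', j')))
          \<le> f (fst (?i, Suc k - ?i)) + g (snd (?i, Suc k - ?i)) + (f (fst (i', j')) + g (snd (i', j')))"
        using cv by simp
    qed
    moreover have "k - (?i - 1) = Suc k - ?i" using False by simp
    ultimately have "?i - 1 \<in> S k" using ik False by (simp add: S_def)
    then show ?thesis using Max_ge[OF S_fin] by fastforce
  qed
qed

lemma minus_step1:
  assumes k: "k < n + m"
  shows "Min (S k) \<le> Min (S (Suc k))"
proof -
  let ?i = "Min (S (Suc k))"
  have iS: "?i \<in> S (Suc k)" using Smin k by simp
  then have ik: "?i \<le> Suc k" and rp: "relevant n m f g \<delta> (?i, Suc k - ?i)" by (auto simp: S_def)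
  obtain i' j' where o: "(i', j') \<in> points n m" "i' + j' = k"
    "f i' + g j' = minplus_conv n m f g k" "i' \<in> S k"
    using opt_S[of k] k by auto
  show ?thesis
  proof (cases "i' \<le> ?i")
    case True
    then show ?thesis using Min_le[OF S_fin o(4)] by simp
  next
    case False
    have pts: "?i \<le> n" "Suc k - ?i \<le> m" using rp by (auto simp: relevant_def points_def)
    have jm: "j' \<le> m" "i' \<le> n" using o(1) by (auto simp: points_def)
    have cv: "g (Suc j') - g j' \<le> g (Suc (Suc k - ?i - 1)) - g (Suc k - ?i - 1)"
      by (rule conv_mono[OF cg]) (use False pts o(2) in auto)
    have "relevant n m f g \<delta> (?i, Suc k - ?i - 1)"
    proof (rule exch[OF rp, of "(i', j')" _ "(i', Suc j')"])
      show "(i', j') \<in> points n m" by fact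
      show "f (fst (i', j')) + g (snd (i', j')) = minplus_conv n m f g (fst (i', j') + snd (i', j'))"
        using o by simp
      show "(?i, Suc k - ?i - 1) \<in> points n m" using pts by (auto simp: points_def)
      show "(i', Suc j') \<in> points n m" using jm False pts o(2) by (auto simp: points_def)
      show "fst (?i, Suc k - ?i - 1) + snd (?i, Suc k - ?i - 1) = fst (i', j') + snd (i', j')"
        using ik o(2) False by simp
      show "fst (i', Suc j') + snd (i', Suc j') = fst (?i, Suc k - ?i) + snd (?i, Suc k - ?i)"
        using ik o(2) by simp
      have "Suc (Suc k - ?i - 1) = Suc k - ?i" using False o(2) by simp
      then show "f (fst (?i, Suc k - ?i - 1)) + g (snd (?i, Suc k - ?i - 1)) + (f (fst (i', Suc j')) + g (snd (i', Suc j')))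
          \<le> f (fst (?i, Suc k - ?i)) + g (snd (?i, Suc k - ?i)) + (f (fst (i', j')) + g (snd (i', j')))"
        using cv by simp
    qed
    moreover have "k - ?i = Suc k - ?i - 1" by simp
    ultimately have "?i \<in> S k" using False o(2) by (simp add: S_def)
    then show ?thesis using Min_le[OF S_fin] by fastforce
  qed
qed

lemma minus_step2:
  assumes k: "k < n + m"
  shows "Min (S (Suc k)) \<le> Suc (Min (S k))"
proof -
  let ?i = "Min (S k)"
  have iS: "?i \<in> S k" using Smin k by simp
  then have ik: "?i \<le> k" and rp: "relevant n m f g \<delta> (?i, k - ?i)" by (auto simp: S_def)
  obtain i' j' where o: "(i', j') \<in> points n m" "i' + j' = Suc k"
    "f i' + g j' = minplus_conv n m f g (Suc k)" "i' \<in> S (Suc k)"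
    using opt_S[of "Suc k"] k by auto
  show ?thesis
  proof (cases "i' \<le> Suc ?i")
    case True
    then show ?thesis using Min_le[OF S_fin o(4)] by simp
  next
    case False
    have pts: "?i \<le> n" "k - ?i \<le> m" using rp by (auto simp: relevant_def points_def)
    have jm: "j' \<le> m" "i' \<le> n" using o(1) by (auto simp: points_def)
    have cv: "f (Suc ?i) - f ?i \<le> f (Suc (i' - 1)) - f (i' - 1)"
      by (rule conv_mono[OF cf]) (use False jm in auto)
    have "relevant n m f g \<delta> (Suc ?i, k - ?i)"
    proof (rule exch[OF rp, of "(i', j')" _ "(i' - 1, j')"])
      show "(i', j') \<in> points n m" by fact
      show "f (fst (i', j')) + g (snd (i', j')) = minplus_conv n m f g (fst (i', j') + snd (i', j'))"
        using o by simp
      show "(Suc ?i, k - ?i) \<in> points n m" using pts False jm by (auto simp: points_def)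
      show "(i' - 1, j') \<in> points n m" using jm by (auto simp: points_def)
      show "fst (Suc ?i, k - ?i) + snd (Suc ?i, k - ?i) = fst (i', j') + snd (i', j')"
        using ik o(2) by simp
      show "fst (i' - 1, j') + snd (i' - 1, j') = fst (?i, k - ?i) + snd (?i, k - ?i)"
        using ik o(2) False by simp
      have "Suc (i' - 1) = i'" using False by simp
      then show "f (fst (Suc ?i, k - ?i)) + g (snd (Suc ?i, k - ?i)) + (f (fst (i' - 1, j')) + g (snd (i' - 1, j')))
          \<le> f (fst (?i, k - ?i)) + g (snd (?i, k - ?i)) + (f (fst (i', j')) + g (snd (i', j')))"
        using cv by simp
    qed
    then have "Suc ?i \<in> S (Suc k)" using ik by (simp add: S_def)
    then show ?thesis using Min_le[OF S_fin] by simp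
  qed
qed

lemma main_ctx: "monotone_path n m (P_minus n m f g \<delta>) \<and> monotone_path n m (P_plus n m f g \<delta>)"
proof
  show "monotone_path n m (P_minus n m f g \<delta>)" unfolding P_minus_eq
    by (rule mpath) (use Smin S_pts minus_step1 minus_step2 in auto)
  show "monotone_path n m (P_plus n m f g \<delta>)" unfolding P_plus_eq
    by (rule mpath) (use Smax S_pts plus_step1 plus_step2 in auto)
qed

end

theorem mainTheorem12:
  fixes n m :: nat and f g :: "nat \<Rightarrow> rat" and \<delta> :: rat
  assumes "convex_on_range n f" and "convex_on_range m g" and "\<delta> \<ge> 0"
  shows "monotone_path n m (P_minus n m f g \<delta>) \<and> monotone_path n m (P_plus n m f g \<delta>)"
  using main_ctx[OF assms] .

end
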